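(* Let $(N,v)$ be a TU game and $\delta>0$. Following the Coalition Proposal algorithm (described in the context) for $(N,v)$, if the environment state at some iteration lies in $\Omega(v)$, then the environment state at every subsequent iteration lies in $\Omega(v)$.
   Context: A TU game is a pair $(N,v)$ with $N=\{1,\dots,n\}$ and $v:2^N\to\mathbb{R}$, $v(\emptyset)=0$. Coalition Proposal algorithm with step $\delta$: each player $i$ holds an aspiration $a_i$ and a coalition state $C_i\subseteq N$. In each iteration: a player $i\in N$ is activated at random; $i$ chooses at random a set $S\subseteq N\setminus\{i\}$ and proposes $J=S\cup\{i\}$. If $\sum_{j\in J}a_j+\delta\le v(J)$ (success): $a_i\leftarrow a_i+\delta$; then for every $j\in J$ and every $k\in C_j$ with $k\neq j$, set $C_k\leftarrow\emptyset$; then set $C_j\leftarrow J$ for all $j\in J$. Otherwise (failure): if $C_i=\emptyset$, set $a_i\leftarrow\max(v(\{i\}),a_i-\delta)$. Finally, if $a_i=v(\{i\})$ and $C_i=\emptyset$, set $C_i\leftarrow\{i\}$. The environment state is $(\mathbf{a},\mathcal{C})$ with $\mathbf{a}=(a_1,\dots,a_n)$ and $\mathcal{C}=\{C_i:i\in N\}$ the set of (nonempty) formed coalitions. A feasible environment state is a pair $(\mathbf{a},\mathcal{C})$ with $\mathbf{a}\in\mathbb{R}^n$ and $\mathcal{C}$ a set of pairwise disjoint subsets of $N$ such that $a_i\ge v(\{i\})$ for all $i\in N$ and $\sum_{i\in S}a_i\le v(S)$ for all $S\in\mathcal{C}$. $\Omega(v)$ is the set of feasible environment states. *)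

theory Defs
  imports Complex_Main
begin

text \<open>Players are N = {1..n}. A TU game is v :: nat set => real with v {} = 0
  (only values on subsets of N matter).
  An algorithm state is a pair (a, C): aspirations a i and coalition states C i.\<close>

type_synonym cp_state = "(nat \<Rightarrow> real) \<times> (nat \<Rightarrow> nat set)"

definition players :: "nat \<Rightarrow> nat set" where
  "players n = {1..n}"

definition cp_finalize :: "(nat set \<Rightarrow> real) \<Rightarrow> nat \<Rightarrow> cp_state \<Rightarrow> cp_state" where
  "cp_finalize v i s =
     (case s of (a, C) \<Rightarrow>
        (a, if a i = v {i} \<and> C i = {} then C(i := {i}) else C))"

text \<open>One iteration in which player i is activated and proposes J = S \<union> {i}.
  The resets C_k := {} use the coalition states before the update.\<close>
definition cp_update ::
  "(nat set \<Rightarrow> real) \<Rightarrow> real \<Rightarrow> nat \<Rightarrow> nat set \<Rightarrow> cp_state \<Rightarrow> cp_state" where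
  "cp_update v \<delta> i S s =
     (case s of (a, C) \<Rightarrow>
        (let J = insert i S in
         if (\<Sum>j\<in>J. a j) + \<delta> \<le> v J then
           (let a' = a(i := a i + \<delta>);
                C1 = (\<lambda>k. if (\<exists>j\<in>J. k \<in> C j \<and> k \<noteq> j) then {} else C k);
                C2 = (\<lambda>k. if k \<in> J then J else C1 k)
            in cp_finalize v i (a', C2))
         else
           (let a' = (if C i = {} then a(i := max (v {i}) (a i - \<delta>)) else a)
            in cp_finalize v i (a', C))))"

text \<open>One iteration of the Coalition Proposal algorithm (random choices = nondeterminism).\<close>
definition cp_step :: "nat \<Rightarrow> (nat set \<Rightarrow> real) \<Rightarrow> real \<Rightarrow> cp_state \<Rightarrow> cp_state \<Rightarrow> bool" where
  "cp_step n v \<delta> s s' \<longleftrightarrow>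
     (\<exists>i\<in>players n. \<exists>S. S \<subseteq> players n - {i} \<and> s' = cp_update v \<delta> i S s)"

definition formed_coalitions :: "nat \<Rightarrow> cp_state \<Rightarrow> nat set set" where
  "formed_coalitions n s = {snd s i | i. i \<in> players n \<and> snd s i \<noteq> {}}"

definition Omega :: "nat \<Rightarrow> (nat set \<Rightarrow> real) \<Rightarrow> cp_state set" where
  "Omega n v = {s. (\<forall>i\<in>players n. fst s i \<ge> v {i})
                 \<and> (\<forall>S\<in>formed_coalitions n s. S \<subseteq> players n)
                 \<and> pairwise disjnt (formed_coalitions n s)
                 \<and> (\<forall>S\<in>formed_coalitions n s. (\<Sum>j\<in>S. fst s j) \<le> v S)}"

definition cp_consistent :: "nat \<Rightarrow> cp_state \<Rightarrow> bool" where
  "cp_consistent n s \<longleftrightarrow>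
     (\<forall>i\<in>players n. snd s i = {} \<or>
        (i \<in> snd s i \<and> snd s i \<subseteq> players n \<and> (\<forall>k\<in>snd s i. snd s k = snd s i)))"

end

theory Submission
  imports Defs
begin

definition ccons :: "nat \<Rightarrow> (nat \<Rightarrow> nat set) \<Rightarrow> bool" where
  "ccons n C \<longleftrightarrow> (\<forall>i\<in>players n. C i = {} \<or>
        (i \<in> C i \<and> C i \<subseteq> players n \<and> (\<forall>k\<in>C i. C k = C i)))"

lemma cons_iff: "cp_consistent n (a, C) = ccons n C"
  by (simp add: cp_consistent_def ccons_def)

lemma omega_iff:
  assumes "ccons n C"
  shows "(a, C) \<in> Omega n v \<longleftrightarrow> (\<forall>i\<in>players n. a i \<ge> v {i}) \<and>
     (\<forall>k\<in>players n. C k \<noteq> {} \<longrightarrow> (\<Sum>j\<in>C k. a j) \<le> v (C k))"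
proof -
  have fc: "formed_coalitions n (a, C) = {C i | i. i \<in> players n \<and> C i \<noteq> {}}"
    by (simp add: formed_coalitions_def)
  have sub: "\<forall>S\<in>formed_coalitions n (a, C). S \<subseteq> players n"
    using assms unfolding fc ccons_def by auto
  have dj: "pairwise disjnt (formed_coalitions n (a, C))"
    unfolding pairwise_def disjnt_def fc
  proof (intro ballI impI)
    fix X Y assume X: "X \<in> {C i |i. i \<in> players n \<and> C i \<noteq> {}}"
      and Y: "Y \<in> {C i |i. i \<in> players n \<and> C i \<noteq> {}}" and ne: "X \<noteq> Y"
    obtain k where k: "k \<in> players n" "C k \<noteq> {}" "X = C k" using X by blast
    obtain l where l: "l \<in> players n" "C l \<noteq> {}" "Y = C l" using Y by blast
    show "X \<inter> Y = {}"
    proof (rule ccontr)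
      assume "X \<inter> Y \<noteq> {}"
      then obtain m where mk: "m \<in> C k" and ml: "m \<in> C l" using k l by blast
      have "C m = C k" using assms k mk unfolding ccons_def by blast
      moreover have "C m = C l" using assms l ml unfolding ccons_def by blast
      ultimately show False using ne k l by simp
    qed
  qed
  have "(\<forall>S\<in>formed_coalitions n (a, C). (\<Sum>j\<in>S. a j) \<le> v S) \<longleftrightarrow>
     (\<forall>k\<in>players n. C k \<noteq> {} \<longrightarrow> (\<Sum>j\<in>C k. a j) \<le> v (C k))"
    unfolding fc by blast
  thus ?thesis unfolding Omega_def using sub dj by simp
qed

lemma players_fin: "finite (players n)" by (simp add: players_def)

lemma upd_cons:
  assumes c: "ccons n C" and i: "i \<in> players n" and S: "S \<subseteq> players n - {i}"
    and u: "cp_update v \<delta> i S (a, C) = (a', C')"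
  shows "ccons n C'"
proof -
  define J where "J = insert i S"
  have JN: "J \<subseteq> players n" using i S J_def by auto
  show ?thesis
  proof (cases "(\<Sum>j\<in>J. a j) + \<delta> \<le> v J")
    case True
    define C1 where "C1 = (\<lambda>k. if (\<exists>j\<in>J. k \<in> C j \<and> k \<noteq> j) then {} else C k)"
    define C2 where "C2 = (\<lambda>k. if k \<in> J then J else C1 k)"
    have iJ: "i \<in> J" using J_def by simp
    have "cp_update v \<delta> i S (a,C) = cp_finalize v i (a(i := a i + \<delta>), C2)"
      unfolding cp_update_def C2_def C1_def J_def Let_def using True[unfolded J_def] by simp
    also have "\<dots> = (a(i := a i + \<delta>), C2)" proof -
      have "C2 i \<noteq> {}" using iJ unfolding C2_def by auto
      thus ?thesis unfolding cp_finalize_def by simp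
    qed
    finally have C': "C' = C2" using u by simp
    show ?thesis unfolding C' ccons_def
    proof
      fix k assume k: "k \<in> players n"
      show "C2 k = {} \<or> k \<in> C2 k \<and> C2 k \<subseteq> players n \<and> (\<forall>m\<in>C2 k. C2 m = C2 k)"
      proof (cases "k \<in> J")
        case True thus ?thesis using JN C2_def by auto
      next
        case kJ: False
        show ?thesis
        proof (cases "C1 k = {}")
          case True thus ?thesis using kJ C2_def by simp
        next
          case False
          hence nr: "\<not> (\<exists>j\<in>J. k \<in> C j \<and> k \<noteq> j)" and C1k: "C1 k = C k"
            unfolding C1_def by (auto split: if_splits)
          have ck: "k \<in> C k \<and> C k \<subseteq> players n \<and> (\<forall>m\<in>C k. C m = C k)"
            using c k False C1k unfolding ccons_def by auto
          have mem: "C2 m = C k" if m: "m \<in> C k" for m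
          proof -
            have Cm: "C m = C k" using ck m by blast
            have mJ: "m \<notin> J"
            proof
              assume "m \<in> J" thus False using nr Cm ck kJ by metis
            qed
            have "\<not> (\<exists>j\<in>J. m \<in> C j \<and> m \<noteq> j)"
            proof
              assume "\<exists>j\<in>J. m \<in> C j \<and> m \<noteq> j"
              then obtain j where j: "j \<in> J" "m \<in> C j" "m \<noteq> j" by blast
              have "C j \<noteq> {}" using j by auto
              hence "C m = C j" using c j JN unfolding ccons_def by blast
              hence "k \<in> C j" using Cm ck by metis
              moreover have "k \<noteq> j" using kJ j by auto
              ultimately show False using nr j by blast
            qed
            thus ?thesis using mJ Cm unfolding C2_def C1_def by auto
          qed
          have "C2 k = C k" using mem ck by blast
          thus ?thesis using ck mem by (metis (no_types, lifting))
        qed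
      qed
    qed
  next
    case False
    define a1 where "a1 = (if C i = {} then a(i := max (v {i}) (a i - \<delta>)) else a)"
    have u2: "cp_finalize v i (a1, C) = (a', C')" using u False
      unfolding cp_update_def by (simp add: J_def[symmetric] a1_def Let_def)
    show ?thesis
    proof (cases "a1 i = v {i} \<and> C i = {}")
      case True
      hence C': "C' = C(i := {i})" using u2 unfolding cp_finalize_def by simp
      have notin: "i \<notin> C k" if "k \<in> players n" for k
        using c that True unfolding ccons_def by fastforce
      show ?thesis unfolding C' ccons_def
      proof
        fix k assume k: "k \<in> players n"
        show "(C(i := {i})) k = {} \<or> k \<in> (C(i := {i})) k \<and> (C(i := {i})) k \<subseteq> players n \<and>
          (\<forall>m\<in>(C(i := {i})) k. (C(i := {i})) m = (C(i := {i})) k)"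
        proof (cases "k = i")
          case True thus ?thesis using i by simp
        next
          case False
          thus ?thesis using c k notin[OF k] unfolding ccons_def by auto
        qed
      qed
    next
      case False
      hence "cp_finalize v i (a1, C) = (a1, C)" unfolding cp_finalize_def by auto
      hence "C' = C" using u2 by simp
      thus ?thesis using c by simp
    qed
  qed
qed


lemma upd_omega:
  assumes c: "ccons n C" and om: "(a, C) \<in> Omega n v" and d: "\<delta> > 0"
    and i: "i \<in> players n" and S: "S \<subseteq> players n - {i}"
    and u: "cp_update v \<delta> i S (a, C) = (a', C')"
  shows "(a', C') \<in> Omega n v"
proof -
  have c': "ccons n C'" using upd_cons[OF c i S u] .
  have om1: "\<forall>i\<in>players n. a i \<ge> v {i}"
    and om2: "\<forall>k\<in>players n. C k \<noteq> {} \<longrightarrow> (\<Sum>j\<in>C k. a j) \<le> v (C k)"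
    using om omega_iff[OF c] by auto
  define J where "J = insert i S"
  have JN: "J \<subseteq> players n" using i S J_def by auto
  have finJ: "finite J" using JN players_fin finite_subset by blast
  have iJ: "i \<in> J" using J_def by simp
  show ?thesis unfolding omega_iff[OF c']
  proof (cases "(\<Sum>j\<in>J. a j) + \<delta> \<le> v J")
    case True
    define C1 where "C1 = (\<lambda>k. if (\<exists>j\<in>J. k \<in> C j \<and> k \<noteq> j) then {} else C k)"
    define C2 where "C2 = (\<lambda>k. if k \<in> J then J else C1 k)"
    have "cp_update v \<delta> i S (a,C) = cp_finalize v i (a(i := a i + \<delta>), C2)"
      unfolding cp_update_def C2_def C1_def J_def Let_def using True[unfolded J_def] by simp
    also have "\<dots> = (a(i := a i + \<delta>), C2)"
    proof -
      have "C2 i \<noteq> {}" using iJ unfolding C2_def by auto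
      thus ?thesis unfolding cp_finalize_def by simp
    qed
    finally have C': "C' = C2" and a': "a' = a(i := a i + \<delta>)" using u by simp_all
    show "(\<forall>i\<in>players n. v {i} \<le> a' i) \<and>
      (\<forall>k\<in>players n. C' k \<noteq> {} \<longrightarrow> sum a' (C' k) \<le> v (C' k))"
    proof (intro conjI ballI impI)
      fix j assume "j \<in> players n" thus "v {j} \<le> a' j" using om1 d a' by auto
    next
      fix k assume k: "k \<in> players n" and ne: "C' k \<noteq> {}"
      show "sum a' (C' k) \<le> v (C' k)"
      proof (cases "k \<in> J")
        case True
        have "sum a' J = a' i + sum a' (J - {i})" using sum.remove[OF finJ iJ] by simp
        also have "sum a' (J - {i}) = sum a (J - {i})" using a' by (intro sum.cong) auto
        also have "a' i = a i + \<delta>" using a' by simp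
        also have "a i + \<delta> + sum a (J - {i}) = sum a J + \<delta>"
          using sum.remove[OF finJ iJ, of a] by simp
        finally show ?thesis using True \<open>sum a J + \<delta> \<le> v J\<close> C' C2_def by simp
      next
        case kJ: False
        have C1k: "C1 k \<noteq> {}" using ne kJ C' C2_def by simp
        hence nr: "\<not> (\<exists>j\<in>J. k \<in> C j \<and> k \<noteq> j)" and Ck: "C1 k = C k"
          unfolding C1_def by (auto split: if_splits)
        have Cne: "C k \<noteq> {}" using C1k Ck by simp
        have ck: "k \<in> C k \<and> (\<forall>m\<in>C k. C m = C k)"
          using c k Cne unfolding ccons_def by blast
        have "i \<notin> C k"
        proof
          assume "i \<in> C k"
          hence "C i = C k" using ck by blast
          hence "k \<in> C i" using ck by metis
          moreover have "k \<noteq> i" using kJ iJ by auto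
          ultimately show False using nr iJ by blast
        qed
        hence "sum a' (C k) = sum a (C k)" using a' by (intro sum.cong) auto
        moreover have "C' k = C k" using C' C2_def kJ Ck by simp
        ultimately show ?thesis using om2 k Cne by simp
      qed
    qed
  next
    case False
    define a1 where "a1 = (if C i = {} then a(i := max (v {i}) (a i - \<delta>)) else a)"
    have u2: "cp_finalize v i (a1, C) = (a', C')" using u False
      unfolding cp_update_def by (simp add: J_def[symmetric] a1_def Let_def)
    have f: "cp_finalize v i (a1, C) = (a1, if a1 i = v {i} \<and> C i = {} then C(i := {i}) else C)"
      unfolding cp_finalize_def by simp
    have a': "a' = a1" and C'opt: "C' = (if a1 i = v {i} \<and> C i = {} then C(i := {i}) else C)"
      using trans[OF u2[symmetric] f] by simp_all
    have ge: "\<forall>j\<in>players n. a1 j \<ge> v {j}" using om1 unfolding a1_def by auto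
    have agree: "a1 j = a j" if k: "k \<in> players n" "C k \<noteq> {}" and j: "j \<in> C k" for k j
    proof (cases "C i = {}")
      case True
      have "j \<noteq> i"
      proof
        assume "j = i"
        hence "C i = C k" using c k j unfolding ccons_def by blast
        thus False using True k by simp
      qed
      thus ?thesis unfolding a1_def by simp
    next
      case False thus ?thesis unfolding a1_def by simp
    qed
    show "(\<forall>i\<in>players n. v {i} \<le> a' i) \<and>
      (\<forall>k\<in>players n. C' k \<noteq> {} \<longrightarrow> sum a' (C' k) \<le> v (C' k))"
    proof (intro conjI ballI impI)
      fix j assume "j \<in> players n" thus "v {j} \<le> a' j" using ge a' by auto
    next
      fix k assume k: "k \<in> players n" and ne: "C' k \<noteq> {}"
      show "sum a' (C' k) \<le> v (C' k)"
      proof (cases "a1 i = v {i} \<and> C i = {} \<and> k = i")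
        case True
        hence "C' k = {i}" using C'opt by simp
        thus ?thesis using True a' by simp
      next
        case False
        hence Ck: "C' k = C k" using C'opt by auto
        hence Cne: "C k \<noteq> {}" using ne by simp
        have "sum a' (C k) = sum a (C k)" using a' agree[OF k Cne] by (intro sum.cong) auto
        thus ?thesis using om2 k Cne Ck by simp
      qed
    qed
  qed
qed

theorem proposition3:
  fixes n :: nat and v :: "nat set \<Rightarrow> real" and \<delta> :: real
    and s0 s s' :: cp_state
  assumes "v {} = 0"
    and "\<delta> > 0"
    and "cp_consistent n s0"
    and "(cp_step n v \<delta>)\<^sup>*\<^sup>* s0 s"
    and "s \<in> Omega n v"
    and "(cp_step n v \<delta>)\<^sup>*\<^sup>* s s'"
  shows "s' \<in> Omega n v"
proof -
  have stepc: "cp_consistent n t'" if st: "cp_step n v \<delta> t t'" and ct: "cp_consistent n t" for t t'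
  proof -
    obtain i S where i: "i \<in> players n" and S: "S \<subseteq> players n - {i}"
      and e: "t' = cp_update v \<delta> i S t" using st unfolding cp_step_def by blast
    obtain a C where t: "t = (a, C)" by (cases t)
    obtain a' C' where t': "t' = (a', C')" by (cases t')
    have "ccons n C'" using upd_cons[of n C i S v \<delta> a a' C'] ct i S e t t'
      by (simp add: cons_iff)
    thus ?thesis using t' cons_iff by simp
  qed
  have consall: "cp_consistent n t" if "(cp_step n v \<delta>)\<^sup>*\<^sup>* s0 t" for t
    using that by (induction rule: rtranclp_induct) (use assms(3) stepc in auto)
  have "s' \<in> Omega n v \<and> cp_consistent n s'" using assms(6)
  proof (induction rule: rtranclp_induct)
    case base thus ?case using assms(5) consall[OF assms(4)] by simp
  next
    case (step t t')
    obtain i S where i: "i \<in> players n" and S: "S \<subseteq> players n - {i}"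
      and e: "t' = cp_update v \<delta> i S t" using step(2) unfolding cp_step_def by blast
    obtain a C where t: "t = (a, C)" by (cases t)
    obtain a' C' where t': "t' = (a', C')" by (cases t')
    have "(a', C') \<in> Omega n v" using upd_omega[of n C a v \<delta> i S a' C'] step(3) assms(2) i S e t t'
      by (simp add: cons_iff)
    hence "t' \<in> Omega n v" using t' by simp
    thus ?case using stepc step by blast
  qed
  thus ?thesis by simp
qed

end
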